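(* Let $(\Omega,\Sigma,\mu)$ be a finite measure space and let $X(\mu)\subseteq L^0(\mu)$ be a Riesz space (i.e. a vector subspace with $\max\{f,g\}\in X(\mu)$ for all $f,g\in X(\mu)$) equipped with a norm. Let $V:X(\mu)\to X(\mu)$, $V(f)=|f|$. (i) If $V$ is continuous, then the positive cone $X(\mu)^+=\{f\in X(\mu): f\ge 0\ \mu\text{-a.e.}\}$ is closed in $X(\mu)$. (ii) If $X(\mu)$ has the subsequence property, then $X(\mu)^+$ is closed in $X(\mu)$.
   Context: $L^0(\mu)$ is the space of equivalence classes (modulo $\mu$-a.e. equality) of real $\Sigma$-measurable functions on $\Omega$, with the order $f\le g$ iff $f\le g$ $\mu$-a.e. A normed space $X(\mu)\subseteq L^0(\mu)$ has the subsequence property if whenever $f_n,f\in X(\mu)$ and $f_n\to f$ in norm, some subsequence $f_{n(k)}$ converges to $f$ pointwise $\mu$-a.e. *)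

theory Defs
  imports "HOL-Analysis.Analysis"
begin

text \<open>Elements of L^0(mu) are represented by real-valued measurable functions;
  a subspace X(mu) of L^0(mu) is represented by the set of ALL representatives of its
  classes (so it is saturated under a.e. equality). A norm on X(mu) is a function N on
  representatives that is a norm modulo a.e. equality.\<close>

definition normed_riesz_L0 ::
  "'a measure \<Rightarrow> ('a \<Rightarrow> real) set \<Rightarrow> (('a \<Rightarrow> real) \<Rightarrow> real) \<Rightarrow> bool" where
  "normed_riesz_L0 M X N \<longleftrightarrow>
     X \<subseteq> borel_measurable M \<and>
     (\<forall>f\<in>X. \<forall>g\<in>borel_measurable M. (AE x in M. f x = g x) \<longrightarrow> g \<in> X) \<and>
     (\<lambda>x. 0) \<in> X \<and>
     (\<forall>f\<in>X. \<forall>g\<in>X. (\<lambda>x. f x + g x) \<in> X) \<and>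
     (\<forall>f\<in>X. \<forall>c::real. (\<lambda>x. c * f x) \<in> X) \<and>
     (\<forall>f\<in>X. \<forall>g\<in>X. (\<lambda>x. max (f x) (g x)) \<in> X) \<and>
     (\<forall>f\<in>X. 0 \<le> N f) \<and>
     (\<forall>f\<in>X. N f = 0 \<longleftrightarrow> (AE x in M. f x = 0)) \<and>
     (\<forall>f\<in>X. \<forall>c::real. N (\<lambda>x. c * f x) = \<bar>c\<bar> * N f) \<and>
     (\<forall>f\<in>X. \<forall>g\<in>X. N (\<lambda>x. f x + g x) \<le> N f + N g)"

definition positive_cone ::
  "'a measure \<Rightarrow> ('a \<Rightarrow> real) set \<Rightarrow> ('a \<Rightarrow> real) set" where
  "positive_cone M X = {f \<in> X. AE x in M. 0 \<le> f x}"

definition norm_closed_in ::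
  "('a \<Rightarrow> real) set \<Rightarrow> (('a \<Rightarrow> real) \<Rightarrow> real) \<Rightarrow> ('a \<Rightarrow> real) set \<Rightarrow> bool" where
  "norm_closed_in X N C \<longleftrightarrow>
     (\<forall>f\<in>X. f \<notin> C \<longrightarrow> (\<exists>r>0. \<forall>g\<in>X. N (\<lambda>x. g x - f x) < r \<longrightarrow> g \<notin> C))"

definition abs_continuous ::
  "('a \<Rightarrow> real) set \<Rightarrow> (('a \<Rightarrow> real) \<Rightarrow> real) \<Rightarrow> bool" where
  "abs_continuous X N \<longleftrightarrow>
     (\<forall>f\<in>X. \<forall>e>0. \<exists>d>0. \<forall>g\<in>X.
        N (\<lambda>x. g x - f x) < d \<longrightarrow> N (\<lambda>x. \<bar>g x\<bar> - \<bar>f x\<bar>) < e)"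

definition subsequence_property ::
  "'a measure \<Rightarrow> ('a \<Rightarrow> real) set \<Rightarrow> (('a \<Rightarrow> real) \<Rightarrow> real) \<Rightarrow> bool" where
  "subsequence_property M X N \<longleftrightarrow>
     (\<forall>fs f. (\<forall>n. fs n \<in> X) \<and> f \<in> X \<and> (\<lambda>n. N (\<lambda>x. fs n x - f x)) \<longlonglongrightarrow> 0 \<longrightarrow>
        (\<exists>r. strict_mono r \<and> (AE x in M. (\<lambda>k. fs (r k) x) \<longlonglongrightarrow> f x)))"

end

theory Submission
  imports Defs
begin

lemma R_add: "normed_riesz_L0 M X N \<Longrightarrow> f \<in> X \<Longrightarrow> g \<in> X \<Longrightarrow> (\<lambda>x. f x + g x) \<in> X"
  unfolding normed_riesz_L0_def by (elim conjE) (drule bspec, assumption, drule bspec, assumption)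
lemma R_smul: "normed_riesz_L0 M X N \<Longrightarrow> f \<in> X \<Longrightarrow> (\<lambda>x. c * f x) \<in> X"
  unfolding normed_riesz_L0_def by (elim conjE) (drule bspec, assumption, erule allE, assumption)
lemma R_max: "normed_riesz_L0 M X N \<Longrightarrow> f \<in> X \<Longrightarrow> g \<in> X \<Longrightarrow> (\<lambda>x. max (f x) (g x)) \<in> X"
  unfolding normed_riesz_L0_def by (elim conjE) (drule bspec, assumption, drule bspec, assumption)
lemma R_nn: "normed_riesz_L0 M X N \<Longrightarrow> f \<in> X \<Longrightarrow> 0 \<le> N f"
  unfolding normed_riesz_L0_def by blast
lemma R_zero: "normed_riesz_L0 M X N \<Longrightarrow> f \<in> X \<Longrightarrow> N f = 0 \<longleftrightarrow> (AE x in M. f x = 0)"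
  unfolding normed_riesz_L0_def by blast
lemma R_Nsmul: "normed_riesz_L0 M X N \<Longrightarrow> f \<in> X \<Longrightarrow> N (\<lambda>x. c * f x) = \<bar>c\<bar> * N f"
  unfolding normed_riesz_L0_def by (elim conjE) (drule bspec, assumption, erule allE, assumption)
lemma R_Nadd: "normed_riesz_L0 M X N \<Longrightarrow> f \<in> X \<Longrightarrow> g \<in> X \<Longrightarrow> N (\<lambda>x. f x + g x) \<le> N f + N g"
  unfolding normed_riesz_L0_def by (elim conjE) (drule bspec, assumption, drule bspec, assumption)

lemma X_diff:
  assumes "normed_riesz_L0 M X N" "f \<in> X" "g \<in> X"
  shows "(\<lambda>x. f x - g x) \<in> X"
proof -
  have "(\<lambda>x. (-1) * g x) \<in> X" using R_smul assms by blast
  then have "(\<lambda>x. f x + (-1) * g x) \<in> X" using R_add[OF assms(1,2)] by blast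
  then show ?thesis by simp
qed

lemma X_abs:
  assumes "normed_riesz_L0 M X N" "f \<in> X"
  shows "(\<lambda>x. \<bar>f x\<bar>) \<in> X"
proof -
  have "(\<lambda>x. (-1) * f x) \<in> X" using R_smul assms by blast
  then have "(\<lambda>x. max (f x) ((-1) * f x)) \<in> X" using R_max[OF assms] by blast
  moreover have "(\<lambda>x. max (f x) ((-1) * f x)) = (\<lambda>x. \<bar>f x\<bar>)" by (auto simp: fun_eq_iff)
  ultimately show ?thesis by simp
qed

lemma N_tri:
  assumes "normed_riesz_L0 M X N" "a \<in> X" "b \<in> X" "c \<in> X"
  shows "N (\<lambda>x. a x - c x) \<le> N (\<lambda>x. a x - b x) + N (\<lambda>x. b x - c x)"
proof -
  have "N (\<lambda>x. (a x - b x) + (b x - c x)) \<le> N (\<lambda>x. a x - b x) + N (\<lambda>x. b x - c x)"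
    by (rule R_Nadd[OF assms(1) X_diff[OF assms(1,2,3)] X_diff[OF assms(1,3,4)]])
  then show ?thesis by simp
qed

lemma N_sym:
  assumes "normed_riesz_L0 M X N" "a \<in> X" "b \<in> X"
  shows "N (\<lambda>x. a x - b x) = N (\<lambda>x. b x - a x)"
proof -
  have "N (\<lambda>x. (-1) * (a x - b x)) = \<bar>-1\<bar> * N (\<lambda>x. a x - b x)"
    by (rule R_Nsmul[OF assms(1) X_diff[OF assms]])
  then show ?thesis by simp
qed

lemma N_ae:
  assumes "normed_riesz_L0 M X N" "f \<in> X" "g \<in> X" "AE x in M. f x = g x"
  shows "N f = N g"
proof -
  have z: "N (\<lambda>x. f x - g x) = 0" "N (\<lambda>x. g x - f x) = 0"
    using assms R_zero[OF assms(1) X_diff[OF assms(1,2,3)]] R_zero[OF assms(1) X_diff[OF assms(1,3,2)]] by (auto elim: AE_mp)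
  have "N (\<lambda>x. (f x - g x) + g x) \<le> N (\<lambda>x. f x - g x) + N g"
    by (rule R_Nadd[OF assms(1) X_diff[OF assms(1,2,3)] assms(3)])
  moreover have "N (\<lambda>x. (g x - f x) + f x) \<le> N (\<lambda>x. g x - f x) + N f"
    by (rule R_Nadd[OF assms(1) X_diff[OF assms(1,3,2)] assms(2)])
  ultimately show ?thesis using z by simp
qed

theorem lemma2p2:
  fixes M :: "'a measure" and X :: "('a \<Rightarrow> real) set" and N :: "('a \<Rightarrow> real) \<Rightarrow> real"
  assumes "finite_measure M"
    and "normed_riesz_L0 M X N"
  shows "(abs_continuous X N \<longrightarrow> norm_closed_in X N (positive_cone M X))
       \<and> (subsequence_property M X N \<longrightarrow> norm_closed_in X N (positive_cone M X))"
proof (intro conjI impI)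
  note R = assms(2)
  assume ac: "abs_continuous X N"
  show "norm_closed_in X N (positive_cone M X)"
    unfolding norm_closed_in_def
  proof (intro ballI impI)
    fix f assume fX: "f \<in> X" and fC: "f \<notin> positive_cone M X"
    have afX: "(\<lambda>x. \<bar>f x\<bar>) \<in> X" using X_abs[OF R fX] .
    have hX: "(\<lambda>x. \<bar>f x\<bar> - f x) \<in> X" using X_diff[OF R afX fX] .
    have "\<not> (AE x in M. 0 \<le> f x)" using fC fX unfolding positive_cone_def by blast
    moreover have "(AE x in M. \<bar>f x\<bar> - f x = 0) \<Longrightarrow> (AE x in M. 0 \<le> f x)"
      by (erule AE_mp) (auto intro!: AE_I2)
    ultimately have "N (\<lambda>x. \<bar>f x\<bar> - f x) \<noteq> 0" using R_zero[OF R hX] by blast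
    moreover have "N (\<lambda>x. \<bar>f x\<bar> - f x) \<ge> 0" using R_nn[OF R hX] .
    ultimately have Npos: "N (\<lambda>x. \<bar>f x\<bar> - f x) > 0" by simp
    define e where "e = N (\<lambda>x. \<bar>f x\<bar> - f x) / 2"
    have e: "e > 0" using Npos by (simp add: e_def)
    then obtain d where d: "d > 0" and dd: "\<And>g. g \<in> X \<Longrightarrow> N (\<lambda>x. g x - f x) < d \<Longrightarrow> N (\<lambda>x. \<bar>g x\<bar> - \<bar>f x\<bar>) < e"
      using ac fX unfolding abs_continuous_def by blast
    show "\<exists>r>0. \<forall>g\<in>X. N (\<lambda>x. g x - f x) < r \<longrightarrow> g \<notin> positive_cone M X"
    proof (intro exI[of _ "min d e"] conjI ballI impI)
      show "min d e > 0" using d e by simp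
      fix g assume gX: "g \<in> X" and gn: "N (\<lambda>x. g x - f x) < min d e"
      show "g \<notin> positive_cone M X"
      proof
        assume "g \<in> positive_cone M X"
        then have gp: "AE x in M. 0 \<le> g x" unfolding positive_cone_def by blast
        have agX: "(\<lambda>x. \<bar>g x\<bar>) \<in> X" using X_abs[OF R gX] .
        have "N (\<lambda>x. \<bar>g x\<bar> - \<bar>f x\<bar>) < e" using dd[OF gX] gn by simp
        moreover have "N (\<lambda>x. \<bar>g x\<bar> - \<bar>f x\<bar>) = N (\<lambda>x. g x - \<bar>f x\<bar>)"
          by (rule N_ae[OF R X_diff[OF R agX afX] X_diff[OF R gX afX]]) (use gp in \<open>auto elim: AE_mp\<close>)
        moreover have "N (\<lambda>x. g x - \<bar>f x\<bar>) = N (\<lambda>x. \<bar>f x\<bar> - g x)" using N_sym[OF R gX afX] .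
        moreover have "N (\<lambda>x. \<bar>f x\<bar> - f x) \<le> N (\<lambda>x. \<bar>f x\<bar> - g x) + N (\<lambda>x. g x - f x)"
          using N_tri[OF R afX gX fX] .
        ultimately show False using gn unfolding e_def by simp
      qed
    qed
  qed
next
  note R = assms(2)
  assume sp: "subsequence_property M X N"
  show "norm_closed_in X N (positive_cone M X)"
    unfolding norm_closed_in_def
  proof (intro ballI impI)
    fix f assume fX: "f \<in> X" and fC: "f \<notin> positive_cone M X"
    show "\<exists>r>0. \<forall>g\<in>X. N (\<lambda>x. g x - f x) < r \<longrightarrow> g \<notin> positive_cone M X"
    proof (rule ccontr)
      assume "\<not> ?thesis"
      then have "\<forall>n::nat. \<exists>g. g \<in> X \<and> N (\<lambda>x. g x - f x) < 1 / (Suc n) \<and> g \<in> positive_cone M X"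
        by (metis of_nat_0_less_iff zero_less_Suc divide_pos_pos zero_less_one)
      then obtain gs where gs: "\<And>n. gs n \<in> X" "\<And>n. N (\<lambda>x. gs n x - f x) < 1 / Suc n"
        "\<And>n. gs n \<in> positive_cone M X" by metis
      have nn: "\<And>n. N (\<lambda>x. gs n x - f x) \<ge> 0"
        using gs(1) fX X_diff[OF R] R_nn[OF R] by blast
      have "(\<lambda>n. N (\<lambda>x. gs n x - f x)) \<longlonglongrightarrow> 0"
      proof (rule real_tendsto_sandwich[where f="\<lambda>n. 0" and h="\<lambda>n. 1 / Suc n"])
        show "\<forall>\<^sub>F n in sequentially. 0 \<le> N (\<lambda>x. gs n x - f x)" using nn by simp
        show "\<forall>\<^sub>F n in sequentially. N (\<lambda>x. gs n x - f x) \<le> 1 / Suc n"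
          using gs(2) by (simp add: less_imp_le)
        show "(\<lambda>n. 1 / real (Suc n)) \<longlonglongrightarrow> 0" using LIMSEQ_inverse_real_of_nat
          by (simp add: inverse_eq_divide)
      qed simp
      then obtain r where r: "AE x in M. (\<lambda>k. gs (r k) x) \<longlonglongrightarrow> f x"
        using sp gs(1) fX unfolding subsequence_property_def by blast
      have "AE x in M. \<forall>n. 0 \<le> gs n x"
        using gs(3) unfolding positive_cone_def AE_all_countable by blast
      then have "AE x in M. 0 \<le> f x"
        using r by eventually_elim (auto intro: LIMSEQ_le_const)
      then show False using fC fX unfolding positive_cone_def by blast
    qed
  qed
qed

end
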